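(* The metric space $(\mathcal{GH}_1,d_{\mathrm{GH}})$ of (isometry classes of) compact metric pairs is separable.
   Context: A metric pair $(X,A)$ is a metric space $(X,d_X)$ with a non-empty closed subset $A\subset X$; it is compact if $X$ is compact; pairs are identified up to isometries of the spaces mapping the subsets onto each other. For subsets $X,Y$ of a metric space $(Z,\delta)$, $d^\delta_{\mathrm H}((X,A),(Y,B)):=d^\delta_{\mathrm H}(X,Y)+d^\delta_{\mathrm H}(A,B)$ (usual Hausdorff distances). A metric $\delta$ on $X\sqcup Y$ is admissible if it restricts to $d_X$ on $X$ and $d_Y$ on $Y$; the Gromov--Hausdorff distance of compact metric pairs is $d_{\mathrm{GH}}((X,A),(Y,B)):=\inf_\delta d^\delta_{\mathrm H}((X,A),(Y,B))$ over admissible $\delta$. $\mathcal{GH}_1$ is the space of compact metric pairs with this distance. *)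

theory Defs
  imports "HOL-Analysis.Analysis"
begin

definition compact_metric_pair :: "'a set \<Rightarrow> 'a set \<Rightarrow> ('a \<Rightarrow> 'a \<Rightarrow> real) \<Rightarrow> bool" where
  "compact_metric_pair X A d \<longleftrightarrow>
     Metric_space X d \<and>
     compact_space (Metric_space.mtopology X d) \<and>
     A \<noteq> {} \<and> A \<subseteq> X \<and>
     closedin (Metric_space.mtopology X d) A"

definition hausdist_in :: "('a \<Rightarrow> 'a \<Rightarrow> real) \<Rightarrow> 'a set \<Rightarrow> 'a set \<Rightarrow> real" where
  "hausdist_in \<delta> S T =
     (if S \<noteq> {} \<and> T \<noteq> {}
      then max (SUP s\<in>S. INF t\<in>T. \<delta> s t) (SUP t\<in>T. INF s\<in>S. \<delta> s t)
      else 0)"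

definition admissible ::
  "'a set \<Rightarrow> ('a \<Rightarrow> 'a \<Rightarrow> real) \<Rightarrow> 'b set \<Rightarrow> ('b \<Rightarrow> 'b \<Rightarrow> real)
     \<Rightarrow> ('a + 'b \<Rightarrow> 'a + 'b \<Rightarrow> real) \<Rightarrow> bool" where
  "admissible X dX Y dY \<delta> \<longleftrightarrow>
     Metric_space (X <+> Y) \<delta> \<and>
     (\<forall>x\<in>X. \<forall>x'\<in>X. \<delta> (Inl x) (Inl x') = dX x x') \<and>
     (\<forall>y\<in>Y. \<forall>y'\<in>Y. \<delta> (Inr y) (Inr y') = dY y y')"

definition dGH ::
  "'a set \<Rightarrow> 'a set \<Rightarrow> ('a \<Rightarrow> 'a \<Rightarrow> real) \<Rightarrow> 'b set \<Rightarrow> 'b set \<Rightarrow> ('b \<Rightarrow> 'b \<Rightarrow> real) \<Rightarrow> real" where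
  "dGH X A dX Y B dY =
     Inf {hausdist_in \<delta> (Inl ` X) (Inr ` Y) + hausdist_in \<delta> (Inl ` A) (Inr ` B) | \<delta>.
            admissible X dX Y dY \<delta>}"

end

theory Submission
  imports Defs
begin

lemma hd_nonneg:
  assumes ms: "Metric_space M \<delta>" and S: "S \<noteq> {}" and T: "T \<noteq> {}"
    and K: "\<And>a b. a \<in> S \<Longrightarrow> b \<in> T \<Longrightarrow> \<delta> a b \<le> K"
  shows "0 \<le> hausdist_in \<delta> S T"
proof -
  interpret Metric_space M \<delta> by (rule ms)
  obtain s0 where s0: "s0 \<in> S" using S by blast
  have bb: "bdd_below (\<delta> s ` T)" for s by (rule bdd_belowI[of _ 0]) auto
  have i0: "0 \<le> (INF t\<in>T. \<delta> s t)" for s by (rule cINF_greatest[OF T]) auto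
  have iK: "(INF t\<in>T. \<delta> s t) \<le> K" if "s \<in> S" for s
  proof -
    obtain t where "t \<in> T" using T by blast
    then have "(INF t\<in>T. \<delta> s t) \<le> \<delta> s t" by (rule cINF_lower[OF bb])
    also have "\<dots> \<le> K" using K that \<open>t \<in> T\<close> by blast
    finally show ?thesis .
  qed
  have "bdd_above ((\<lambda>s. INF t\<in>T. \<delta> s t) ` S)" by (rule bdd_aboveI[of _ K]) (use iK in auto)
  then have "(INF t\<in>T. \<delta> s0 t) \<le> (SUP s\<in>S. INF t\<in>T. \<delta> s t)" by (rule cSUP_upper[OF s0])
  with i0[of s0] have "0 \<le> (SUP s\<in>S. INF t\<in>T. \<delta> s t)" by linarith
  then show ?thesis using S T unfolding hausdist_in_def by simp
qed

lemma hd_le: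
  assumes nn: "\<And>a b. 0 \<le> \<delta> a b" and S: "S \<noteq> {}" and T: "T \<noteq> {}"
    and st: "\<And>s. s \<in> S \<Longrightarrow> \<exists>t\<in>T. \<delta> s t \<le> c"
    and ts: "\<And>t. t \<in> T \<Longrightarrow> \<exists>s\<in>S. \<delta> s t \<le> c"
  shows "hausdist_in \<delta> S T \<le> c"
proof -
  have "(SUP s\<in>S. INF t\<in>T. \<delta> s t) \<le> c"
  proof (rule cSUP_least[OF S])
    fix s assume "s \<in> S"
    then obtain t where t: "t \<in> T" "\<delta> s t \<le> c" using st by blast
    have "bdd_below (\<delta> s ` T)" by (rule bdd_belowI[of _ 0]) (auto simp: nn)
    then have "(INF t\<in>T. \<delta> s t) \<le> \<delta> s t" by (rule cINF_lower[OF _ t(1)])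
    then show "(INF t\<in>T. \<delta> s t) \<le> c" using t by linarith
  qed
  moreover have "(SUP t\<in>T. INF s\<in>S. \<delta> s t) \<le> c"
  proof (rule cSUP_least[OF T])
    fix t assume "t \<in> T"
    then obtain s where s: "s \<in> S" "\<delta> s t \<le> c" using ts by blast
    have "bdd_below ((\<lambda>s. \<delta> s t) ` S)" by (rule bdd_belowI[of _ 0]) (auto simp: nn)
    then have "(INF s\<in>S. \<delta> s t) \<le> \<delta> s t" by (rule cINF_lower[OF _ s(1)])
    then show "(INF s\<in>S. \<delta> s t) \<le> c" using s by linarith
  qed
  ultimately show ?thesis using S T unfolding hausdist_in_def by simp
qed

definition glue :: "('a \<Rightarrow> 'a \<Rightarrow> real) \<Rightarrow> ('b \<Rightarrow> 'b \<Rightarrow> real) \<Rightarrow> ('b \<Rightarrow> 'a) \<Rightarrow> real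
   \<Rightarrow> 'a + 'b \<Rightarrow> 'a + 'b \<Rightarrow> real" where
  "glue dX dY \<phi> r u v = (case u of
      Inl x \<Rightarrow> (case v of Inl x' \<Rightarrow> dX x x' | Inr y \<Rightarrow> dX x (\<phi> y) + r)
    | Inr y \<Rightarrow> (case v of Inl x \<Rightarrow> dX x (\<phi> y) + r | Inr y' \<Rightarrow> dY y y'))"

lemma glue_adm:
  assumes mX: "Metric_space X dX" and mY: "Metric_space Y dY" and phi: "\<And>y. y \<in> Y \<Longrightarrow> \<phi> y \<in> X"
    and r: "r > 0"
    and lo: "\<And>y y'. y \<in> Y \<Longrightarrow> y' \<in> Y \<Longrightarrow> dX (\<phi> y) (\<phi> y') \<le> dY y y'"
    and hi: "\<And>y y'. y \<in> Y \<Longrightarrow> y' \<in> Y \<Longrightarrow> dY y y' \<le> dX (\<phi> y) (\<phi> y') + r"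
  shows "admissible X dX Y dY (glue dX dY \<phi> r)"
proof -
  interpret X: Metric_space X dX by (rule mX)
  interpret Y: Metric_space Y dY by (rule mY)
  have "Metric_space (X <+> Y) (glue dX dY \<phi> r)"
  proof
    fix u v show "0 \<le> glue dX dY \<phi> r u v"
      using r by (auto simp: glue_def split: sum.splits intro: add_nonneg_nonneg less_imp_le)
    show "glue dX dY \<phi> r u v = glue dX dY \<phi> r v u"
      by (auto simp: glue_def X.commute Y.commute split: sum.splits)
  next
    fix u v assume "u \<in> X <+> Y" "v \<in> X <+> Y"
    then show "(glue dX dY \<phi> r u v = 0) = (u = v)"
      using r by (auto simp: glue_def split: sum.splits) (smt (verit) X.nonneg)+
  next
    fix u v w assume "u \<in> X <+> Y" "v \<in> X <+> Y" "w \<in> X <+> Y"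
    then show "glue dX dY \<phi> r u w \<le> glue dX dY \<phi> r u v + glue dX dY \<phi> r v w"
      apply (elim PlusE) apply (auto simp: glue_def)
      using X.triangle X.commute Y.triangle Y.commute lo hi phi r
      by (smt (verit))+
  qed
  then show ?thesis unfolding admissible_def by (simp add: glue_def)
qed

lemma cmp_bounded:
  assumes "compact_metric_pair X A dX"
  shows "\<exists>K. \<forall>x\<in>X. \<forall>x'\<in>X. dX x x' \<le> K"
proof -
  interpret Metric_space X dX using assms unfolding compact_metric_pair_def by blast
  have "compactin mtopology X" using assms unfolding compact_metric_pair_def compact_space_def by simp
  then have "mbounded X" by (rule compactin_imp_mbounded)
  then show ?thesis unfolding mbounded_alt by blast
qed

lemma adm_bounded:
  assumes cX: "compact_metric_pair X A dX" and cY: "compact_metric_pair Y B dY"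
    and adm: "admissible X dX Y dY \<delta>"
  shows "\<exists>K. \<forall>u\<in>X <+> Y. \<forall>v\<in>X <+> Y. \<delta> u v \<le> K"
proof -
  interpret Metric_space "X <+> Y" \<delta> using adm unfolding admissible_def by blast
  obtain KX where KX: "\<forall>x\<in>X. \<forall>x'\<in>X. dX x x' \<le> KX" using cmp_bounded[OF cX] by blast
  obtain KY where KY: "\<forall>x\<in>Y. \<forall>x'\<in>Y. dY x x' \<le> KY" using cmp_bounded[OF cY] by blast
  have "mbounded (Inl ` X)" unfolding mbounded_alt
    using KX adm unfolding admissible_def by auto
  moreover have "mbounded (Inr ` Y)" unfolding mbounded_alt
    using KY adm unfolding admissible_def by auto
  ultimately have "mbounded (Inl ` X \<union> Inr ` Y)" by (simp add: mbounded_Un)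
  moreover have "Inl ` X \<union> Inr ` Y = X <+> Y" by (auto simp: Plus_def)
  ultimately show ?thesis unfolding mbounded_alt by auto
qed

lemma dGH_le:
  assumes cX: "compact_metric_pair X A dX" and cY: "compact_metric_pair Y B dY"
    and adm: "admissible X dX Y dY \<delta>"
  shows "dGH X A dX Y B dY \<le> hausdist_in \<delta> (Inl ` X) (Inr ` Y) + hausdist_in \<delta> (Inl ` A) (Inr ` B)"
  unfolding dGH_def
proof (rule cInf_lower)
  show "hausdist_in \<delta> (Inl ` X) (Inr ` Y) + hausdist_in \<delta> (Inl ` A) (Inr ` B)
    \<in> {hausdist_in \<delta> (Inl ` X) (Inr ` Y) + hausdist_in \<delta> (Inl ` A) (Inr ` B) |\<delta>. admissible X dX Y dY \<delta>}"
    using adm by blast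
  have ne: "X \<noteq> {}" "A \<noteq> {}" "Y \<noteq> {}" "B \<noteq> {}" "A \<subseteq> X" "B \<subseteq> Y"
    using cX cY unfolding compact_metric_pair_def by auto
  show "bdd_below {hausdist_in \<delta> (Inl ` X) (Inr ` Y) + hausdist_in \<delta> (Inl ` A) (Inr ` B) |\<delta>. admissible X dX Y dY \<delta>}"
  proof (rule bdd_belowI[of _ 0], clarify)
    fix \<delta>' assume a: "admissible X dX Y dY \<delta>'"
    then have ms: "Metric_space (X <+> Y) \<delta>'" unfolding admissible_def by blast
    obtain K where K: "\<forall>u\<in>X <+> Y. \<forall>v\<in>X <+> Y. \<delta>' u v \<le> K" using adm_bounded[OF cX cY a] by blast
    have "0 \<le> hausdist_in \<delta>' (Inl ` X) (Inr ` Y)"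
      by (rule hd_nonneg[OF ms, of _ _ K]) (use ne K in auto)
    moreover have "0 \<le> hausdist_in \<delta>' (Inl ` A) (Inr ` B)"
      by (rule hd_nonneg[OF ms, of _ _ K]) (use ne K in auto)
    ultimately show "0 \<le> hausdist_in \<delta>' (Inl ` X) (Inr ` Y) + hausdist_in \<delta>' (Inl ` A) (Inr ` B)" by simp
  qed
qed

definition gmap :: "nat \<times> nat list \<times> rat list list \<Rightarrow> real set \<times> real set \<times> (real \<Rightarrow> real \<Rightarrow> real)" where
  "gmap p = (case p of (n, bs, ds) \<Rightarrow> (real ` {..<n}, real ` set bs,
     \<lambda>x y. if x \<in> real ` {..<n} \<and> y \<in> real ` {..<n} then of_rat (ds ! nat \<lfloor>x\<rfloor> ! nat \<lfloor>y\<rfloor>) else 0))"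

lemma finite_model:
  assumes mX: "Metric_space X dX" and FX: "F \<subseteq> X" and fin: "finite F" and TF: "T \<subseteq> F"
    and Tne: "T \<noteq> {}" and e0: "e0 > 0"
  obtains Y B d \<phi> where "(Y, B, d) \<in> range gmap" "compact_metric_pair Y B d"
     "\<forall>y\<in>Y. \<phi> y \<in> F" "\<forall>f\<in>F. \<exists>y\<in>Y. \<phi> y = f" "\<forall>y\<in>B. \<phi> y \<in> T" "\<forall>t\<in>T. \<exists>y\<in>B. \<phi> y = t"
     "\<forall>y\<in>Y. \<forall>y'\<in>Y. dX (\<phi> y) (\<phi> y') \<le> d y y' \<and> d y y' \<le> dX (\<phi> y) (\<phi> y') + 2 * e0"
proof -
  interpret X: Metric_space X dX by (rule mX)
  obtain xs where xs: "set xs = F" "distinct xs" using finite_distinct_list[OF fin] by blast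
  define n where "n = length xs"
  have "\<forall>i j. \<exists>q. dX (xs!i) (xs!j) + e0 < of_rat q \<and> of_rat q < dX (xs!i) (xs!j) + 2 * e0"
    using e0 by (intro allI of_rat_dense) simp
  then obtain Q0 where Q0: "\<And>i j. dX (xs!i) (xs!j) + e0 < of_rat (Q0 i j) \<and> of_rat (Q0 i j) < dX (xs!i) (xs!j) + 2 * e0"
    by metis
  define Q where "Q i j = (if i = j then 0 else max (Q0 i j) (Q0 j i))" for i j
  have Qb: "dX (xs!i) (xs!j) + e0 < of_rat (Q i j) \<and> of_rat (Q i j) < dX (xs!i) (xs!j) + 2 * e0"
    if "i \<noteq> j" for i j
  proof (cases "Q0 i j \<le> Q0 j i")
    case True
    then show ?thesis using that Q0[of j i] X.commute[of "xs!i" "xs!j"] by (simp add: Q_def max_def)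
  next
    case False
    then show ?thesis using that Q0[of i j] by (simp add: Q_def max_def)
  qed
  have Qs: "Q i j = Q j i" for i j by (simp add: Q_def max.commute)
  have Q0d: "Q i i = 0" for i by (simp add: Q_def)
  have Qpos: "0 < (of_rat (Q i j) :: real)" if "i \<noteq> j" for i j
    using Qb[OF that] X.nonneg[of "xs!i" "xs!j"] e0 by linarith
  have Qnn: "0 \<le> (of_rat (Q i j) :: real)" for i j
    using Qpos[of i j] Q0d[of i] by (cases "i = j") auto
  have xsX: "i < n \<Longrightarrow> xs!i \<in> X" for i using xs FX n_def by auto
  have Qtri: "of_rat (Q i k) \<le> of_rat (Q i j) + (of_rat (Q j k) :: real)" if "i < n" "j < n" "k < n" for i j k
  proof -
    consider "i = k" | "i = j" | "j = k" | "i \<noteq> k \<and> i \<noteq> j \<and> j \<noteq> k" by blast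
    then show ?thesis
    proof cases
      case 1 then show ?thesis using Qnn[of i j] Qnn[of j k] Q0d[of i] by simp
    next
      case 2 then show ?thesis using Q0d[of i] by simp
    next
      case 3 then show ?thesis using Q0d[of j] by simp
    next
      case 4
      then show ?thesis using Qb[of i k] Qb[of i j] Qb[of j k] X.triangle[OF xsX[OF that(1)] xsX[OF that(2)] xsX[OF that(3)]]
        by linarith
    qed
  qed
  define bs where "bs = filter (\<lambda>i. xs!i \<in> T) [0..<n]"
  define ds where "ds = map (\<lambda>i. map (\<lambda>j. Q i j) [0..<n]) [0..<n]"
  define Y where "Y = real ` {..<n}"
  define B where "B = real ` {i. i < n \<and> xs!i \<in> T}"
  define d where "d x y = (if x \<in> Y \<and> y \<in> Y then of_rat (Q (nat \<lfloor>x\<rfloor>) (nat \<lfloor>y\<rfloor>)) else (0::real))" for x y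
  define \<phi> where "\<phi> (y::real) = xs ! nat \<lfloor>y\<rfloor>" for y
  have "gmap (n, bs, ds) = (Y, B, d)"
  proof -
    have "set bs = {i. i < n \<and> xs!i \<in> T}" by (auto simp: bs_def)
    moreover have "(\<lambda>x y. if x \<in> real ` {..<n} \<and> y \<in> real ` {..<n} then of_rat (ds ! nat \<lfloor>x\<rfloor> ! nat \<lfloor>y\<rfloor>) else 0) = d"
      by (auto simp: d_def Y_def ds_def fun_eq_iff)
    ultimately show ?thesis by (simp add: gmap_def Y_def B_def)
  qed
  then have rg: "(Y, B, d) \<in> range gmap" by (metis rangeI)
  have dd: "d (real i) (real j) = of_rat (Q i j)" if "i < n" "j < n" for i j
    using that by (simp add: d_def Y_def)
  have ms: "Metric_space Y d"
  proof
    fix x y show "0 \<le> d x y" using Qnn by (simp add: d_def)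
    show "d x y = d y x" using Qs by (simp add: d_def)
  next
    fix x y assume "x \<in> Y" "y \<in> Y"
    then obtain i j where "i < n" "j < n" "x = real i" "y = real j" by (auto simp: Y_def)
    then show "(d x y = 0) = (x = y)" using dd Q0d Qpos[of i j] by (cases "i = j") auto
  next
    fix x y z assume "x \<in> Y" "y \<in> Y" "z \<in> Y"
    then obtain i j k where "i < n" "j < n" "k < n" "x = real i" "y = real j" "z = real k" by (auto simp: Y_def)
    then show "d x z \<le> d x y + d y z" using dd Qtri by simp
  qed
  interpret Y: Metric_space Y d by (rule ms)
  have finY: "finite Y" by (simp add: Y_def)
  have BY: "B \<subseteq> Y" by (auto simp: B_def Y_def)
  have Bne: "B \<noteq> {}"
  proof -
    obtain t where "t \<in> T" using Tne by blast
    then obtain i where "i < n" "xs!i = t" using TF xs by (metis in_set_conv_nth n_def subsetD)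
    then show ?thesis using \<open>t \<in> T\<close> by (auto simp: B_def)
  qed
  have cmp: "compact_metric_pair Y B d"
    unfolding compact_metric_pair_def
  proof (intro conjI ms Bne BY)
    show "compact_space Y.mtopology" unfolding compact_space_def
      by (rule finite_imp_compactin) (use finY in auto)
    show "closedin Y.mtopology B"
      by (rule compactin_imp_closedin[OF Y.Hausdorff_space_mtopology finite_imp_compactin])
        (use BY finY finite_subset in auto)
  qed
  have p1: "\<forall>y\<in>Y. \<phi> y \<in> F" using xs by (auto simp: Y_def \<phi>_def n_def)
  have p2: "\<forall>f\<in>F. \<exists>y\<in>Y. \<phi> y = f"
  proof
    fix f assume "f \<in> F"
    then obtain i where "i < n" "xs!i = f" using xs by (metis in_set_conv_nth n_def)
    then show "\<exists>y\<in>Y. \<phi> y = f" by (intro bexI[of _ "real i"]) (auto simp: Y_def \<phi>_def)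
  qed
  have p3: "\<forall>y\<in>B. \<phi> y \<in> T" by (auto simp: B_def \<phi>_def)
  have p4: "\<forall>t\<in>T. \<exists>y\<in>B. \<phi> y = t"
  proof
    fix t assume "t \<in> T"
    then obtain i where "i < n" "xs!i = t" using TF xs by (metis in_set_conv_nth n_def subsetD)
    then show "\<exists>y\<in>B. \<phi> y = t" using \<open>t \<in> T\<close> by (intro bexI[of _ "real i"]) (auto simp: B_def \<phi>_def)
  qed
  have p5: "\<forall>y\<in>Y. \<forall>y'\<in>Y. dX (\<phi> y) (\<phi> y') \<le> d y y' \<and> d y y' \<le> dX (\<phi> y) (\<phi> y') + 2 * e0"
  proof (intro ballI)
    fix y y' assume "y \<in> Y" "y' \<in> Y"
    then obtain i j where ij: "i < n" "j < n" "y = real i" "y' = real j" by (auto simp: Y_def)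
    show "dX (\<phi> y) (\<phi> y') \<le> d y y' \<and> d y y' \<le> dX (\<phi> y) (\<phi> y') + 2 * e0"
    proof (cases "i = j")
      case True then show ?thesis using ij dd Q0d e0 xsX by (simp add: \<phi>_def)
    next
      case False then show ?thesis using ij dd Qb[OF False] by (simp add: \<phi>_def)
    qed
  qed
  show ?thesis by (rule that[OF rg cmp p1 p2 p3 p4 p5])
qed

lemma dGH_lt:
  fixes X :: "'a set" and Y :: "real set"
  assumes cX: "compact_metric_pair X A dX" and cY: "compact_metric_pair Y B d"
   and adm: "admissible X dX Y d (glue dX d \<phi> r)"
   and H1: "hausdist_in (glue dX d \<phi> r) (Inl ` X) (Inr ` Y) \<le> \<eta> + r"
   and H2: "hausdist_in (glue dX d \<phi> r) (Inl ` A) (Inr ` B) \<le> \<eta> + r"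
   and E: "2 * (\<eta> + r) < \<epsilon>"
  shows "dGH X A dX Y B d < \<epsilon>"
proof -
    have G: "dGH X A dX Y B d \<le> hausdist_in (glue dX d \<phi> r) (Inl ` X) (Inr ` Y) + hausdist_in (glue dX d \<phi> r) (Inl ` A) (Inr ` B)"
      by (rule dGH_le[OF cX cY adm])
    note G
    also have "hausdist_in (glue dX d \<phi> r) (Inl ` X) (Inr ` Y) + hausdist_in (glue dX d \<phi> r) (Inl ` A) (Inr ` B) \<le> (\<eta> + r) + (\<eta> + r)" by (rule add_mono[OF H1 H2])
    also have "\<dots> < \<epsilon>" using E by simp
    finally show ?thesis .
qed
lemma H_bound:
  fixes X :: "'a set" and Y :: "'b set"
  assumes mX: "Metric_space M dX"
   and nn: "\<And>u v. 0 \<le> glue dX d \<phi> r u v"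
   and S3: "X \<subseteq> (\<Union>x\<in>S. Metric_space.mball M dX x \<eta>)"
   and p2: "\<forall>f\<in>S. \<exists>y\<in>Y. \<phi> y = f"
   and phiX: "\<And>y. y \<in> Y \<Longrightarrow> \<phi> y \<in> X"
   and XM: "X \<subseteq> M" and eta: "\<eta> > 0" and Xne: "X \<noteq> {}" and Yne: "Y \<noteq> {}"
  shows "hausdist_in (glue dX d \<phi> r) (Inl ` X) (Inr ` Y) \<le> \<eta> + r"
proof -
  interpret Metric_space M dX by (rule mX)
  show ?thesis
    proof (rule hd_le[OF nn])
      fix s :: "'a + 'b" assume "s \<in> Inl ` X"
      then obtain x where x: "x \<in> X" "s = Inl x" by blast
      then obtain s' where s': "s' \<in> S" "x \<in> mball s' \<eta>" using S3 by blast
      then obtain y where y: "y \<in> Y" "\<phi> y = s'" using p2 by blast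
      have "dX x (\<phi> y) < \<eta>" using s' y commute by auto
      then show "\<exists>t\<in>Inr ` Y. glue dX d \<phi> r s t \<le> \<eta> + r"
        using x y by (intro bexI[of _ "Inr y"]) (auto simp: glue_def)
    next
      fix t :: "'a + 'b" assume "t \<in> Inr ` Y"
      then obtain y where y: "y \<in> Y" "t = Inr y" by blast
      have "dX (\<phi> y) (\<phi> y) = 0" using phiX[OF y(1)] XM by auto
      then show "\<exists>s\<in>Inl ` X. glue dX d \<phi> r s t \<le> \<eta> + r"
        using phiX[OF y(1)] eta y by (intro bexI[of _ "Inl (\<phi> y)"]) (auto simp: glue_def)
    qed (use Xne Yne in auto)
qed

lemma approx_main:
  fixes X :: "'a set"
  assumes cX: "compact_metric_pair X A dX" and eps: "\<epsilon> > 0"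
  shows "\<exists>Y B d. (Y, B, d) \<in> range gmap \<and> compact_metric_pair Y B d \<and> dGH X A dX Y B d < \<epsilon>"
proof -
    interpret Metric_space X dX using cX unfolding compact_metric_pair_def by blast
    have cs: "compact_space mtopology" and clA: "closedin mtopology A" and Ane: "A \<noteq> {}" and AX: "A \<subseteq> X"
      using cX unfolding compact_metric_pair_def by blast+
    define \<eta> where "\<eta> = \<epsilon> / 8"
    have eta: "\<eta> > 0" using eps by (simp add: \<eta>_def)
    have "compactin mtopology X" using cs unfolding compact_space_def by simp
    then have "mtotally_bounded X" by (rule compactin_imp_mtotally_bounded)
    then obtain S where S: "finite S" "S \<subseteq> X" "X \<subseteq> (\<Union>x\<in>S. mball x \<eta>)"
      using eta unfolding mtotally_bounded_def by meson
    have "compactin mtopology A" using closedin_compact_space[OF cs clA] .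
    then have "mtotally_bounded A" by (rule compactin_imp_mtotally_bounded)
    then obtain T where T: "finite T" "T \<subseteq> A" "A \<subseteq> (\<Union>x\<in>T. mball x \<eta>)"
      using eta unfolding mtotally_bounded_def by meson
    have Tne: "T \<noteq> {}" using T(3) Ane by auto
    define e0 where "e0 = \<epsilon> / 16"
    have e0: "e0 > 0" using eps by (simp add: e0_def)
    have FX: "S \<union> T \<subseteq> X" using S T AX by blast
    have finF: "finite (S \<union> T)" using S T by blast
    obtain Y B d \<phi> where rg: "(Y, B, d) \<in> range gmap" and cY: "compact_metric_pair Y B d"
      and p1: "\<forall>y\<in>Y. \<phi> y \<in> S \<union> T" and p2: "\<forall>f\<in>S \<union> T. \<exists>y\<in>Y. \<phi> y = f"
      and p3: "\<forall>y\<in>B. \<phi> y \<in> T" and p4: "\<forall>t\<in>T. \<exists>y\<in>B. \<phi> y = t"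
      and p5: "\<forall>y\<in>Y. \<forall>y'\<in>Y. dX (\<phi> y) (\<phi> y') \<le> d y y' \<and> d y y' \<le> dX (\<phi> y) (\<phi> y') + 2 * e0"
      by (rule finite_model[OF Metric_space_axioms FX finF _ Tne e0]) (use T(2) in auto)
    have mY: "Metric_space Y d" and BY: "B \<subseteq> Y" and Yne: "Y \<noteq> {}" and Bne: "B \<noteq> {}"
      using cY unfolding compact_metric_pair_def by auto
    define r where "r = 2 * e0"
    have r: "r > 0" using e0 by (simp add: r_def)
    have phiX: "\<phi> y \<in> X" if "y \<in> Y" for y using p1 that FX by blast
    have adm: "admissible X dX Y d (glue dX d \<phi> r)"
      by (rule glue_adm[OF Metric_space_axioms mY phiX r]) (use p5 r_def in auto)
    have nn: "0 \<le> glue dX d \<phi> r u v" for u v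
      using adm unfolding admissible_def by (meson Metric_space.nonneg)
    have Xne: "X \<noteq> {}" using Ane AX by auto
    have p2': "\<forall>f\<in>S. \<exists>y\<in>Y. \<phi> y = f" using p2 by blast
    have H1: "hausdist_in (glue dX d \<phi> r) (Inl ` X) (Inr ` Y) \<le> \<eta> + r"
      by (rule H_bound[OF Metric_space_axioms nn S(3) p2' phiX order_refl eta Xne Yne])
    have phiA: "\<phi> y \<in> A" if "y \<in> B" for y using p3 that T(2) by blast
    have H2: "hausdist_in (glue dX d \<phi> r) (Inl ` A) (Inr ` B) \<le> \<eta> + r"
      by (rule H_bound[OF Metric_space_axioms nn T(3) p4 phiA AX eta Ane Bne])
    have E: "2 * (\<eta> + r) < \<epsilon>" unfolding \<eta>_def r_def e0_def using eps by simp
    have "dGH X A dX Y B d < \<epsilon>" by (rule dGH_lt[OF cX cY adm H1 H2 E])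
    then show ?thesis using rg cY by blast
qed

theorem theorem3p7:
  "\<exists>D :: (real set \<times> real set \<times> (real \<Rightarrow> real \<Rightarrow> real)) set.
     countable D \<and>
     (\<forall>(Y, B, dY) \<in> D. compact_metric_pair Y B dY) \<and>
     (\<forall>(X :: 'a set) A dX. compact_metric_pair X A dX \<longrightarrow>
        (\<forall>\<epsilon>>0. \<exists>(Y, B, dY) \<in> D. dGH X A dX Y B dY < \<epsilon>))"
proof -
  define D where "D = {z \<in> range gmap. case z of (Y, B, d) \<Rightarrow> compact_metric_pair Y B d}"
  have sub: "D \<subseteq> range gmap" unfolding D_def by blast
  have c: "countable D"
    by (rule countable_subset[OF sub countable_image[OF countableI_type]])
  have m: "\<forall>(Y, B, dY) \<in> D. compact_metric_pair Y B dY" unfolding D_def by auto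
  have a: "\<forall>(X :: 'a set) A dX. compact_metric_pair X A dX \<longrightarrow>
        (\<forall>\<epsilon>>0. \<exists>(Y, B, dY) \<in> D. dGH X A dX Y B dY < \<epsilon>)"
  proof (intro allI impI)
    fix X :: "'a set" and A dX and \<epsilon> :: real
    assume cX: "compact_metric_pair X A dX" and eps: "\<epsilon> > 0"
    obtain Y B d where Y: "(Y, B, d) \<in> range gmap" "compact_metric_pair Y B d" "dGH X A dX Y B d < \<epsilon>"
      using approx_main[OF cX eps] by blast
    then have "(Y, B, d) \<in> D" unfolding D_def by simp
    then show "\<exists>(Y, B, dY) \<in> D. dGH X A dX Y B dY < \<epsilon>"
      using Y(3) by (intro bexI[of _ "(Y, B, d)"]) simp_all
  qed
  show ?thesis by (intro exI[of _ D] conjI c m a)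
qed

end
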